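(* Let $(a(n))_{n\in\mathbb N_0}$ be a real sequence and for $\lambda>0$ let $N_\lambda$ be Poisson distributed with mean $\lambda$. If $a(n+1)-a(n)=O(\sqrt n)$ as $n\to\infty$, then $|a(n)-\mathbb E[a(N_n)]|=O(n)$ as $n\to\infty$. *)

theory Defs
  imports "HOL-Probability.Probability" "HOL-Library.Landau_Symbols"
begin

end

theory Submission
  imports Defs
begin

lemma pois0:
  assumes r: "r > 0"
  shows "(\<lambda>k. pmf (poisson_pmf r) k) sums 1"
proof -
  have "(\<lambda>n. r^n /\<^sub>R fact n) sums exp r" by (rule exp_converges)
  hence "(\<lambda>n. (r^n /\<^sub>R fact n) * exp (-r)) sums (exp r * exp (-r))" by (rule sums_mult2)
  thus ?thesis using r by (simp add: exp_minus field_simps)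
qed

lemma poisA: assumes r: "r > 0" shows "r * pmf (poisson_pmf r) m = pmf (poisson_pmf r) (Suc m) * real (Suc m)"
proof -
  have f: "(fact (Suc m) :: real) = real (Suc m) * fact m" by (simp only: fact_Suc)
  have g: "r ^ Suc m / (s * t) * e * s = r * (r ^ m / t * e)" if "s \<noteq> 0" "t \<noteq> 0" for s t e :: real
    using that by (simp add: field_simps)
  have "r ^ Suc m / (real (Suc m) * fact m) * exp (-r) * real (Suc m) = r * (r ^ m / fact m * exp (-r))"
    by (rule g) simp_all
  thus ?thesis using r by (simp only: pmf_poisson[OF r] f)
qed
lemma poisB: assumes r: "r > 0" shows "r^2 * pmf (poisson_pmf r) m = pmf (poisson_pmf r) (Suc (Suc m)) * (real (Suc (Suc m)) * (real (Suc (Suc m)) - 1))"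
proof -
  have f: "(fact (Suc (Suc m)) :: real) = real (Suc (Suc m)) * (real (Suc m) * fact m)" by (simp only: fact_Suc)
  have e: "real (Suc (Suc m)) - 1 = real (Suc m)" by simp
  have g: "r ^ Suc (Suc m) / (s * (u * t)) * e * (s * u) = r^2 * (r ^ m / t * e)" if "s \<noteq> 0" "t \<noteq> 0" "u \<noteq> 0" for s t u e :: real
    using that by (simp add: field_simps power2_eq_square)
  have "r ^ Suc (Suc m) / (real (Suc (Suc m)) * (real (Suc m) * fact m)) * exp (-r) * (real (Suc (Suc m)) * real (Suc m)) = r^2 * (r ^ m / fact m * exp (-r))"
    by (rule g) simp_all
  thus ?thesis using r by (simp only: pmf_poisson[OF r] f e)
qed

lemma pois1:
  assumes r: "r > 0"
  shows "(\<lambda>k. pmf (poisson_pmf r) k * real k) sums r"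
proof -
  have "(\<lambda>m. r * pmf (poisson_pmf r) m) sums (r * 1)" by (rule sums_mult[OF pois0[OF r]])
  also have "(\<lambda>m. r * pmf (poisson_pmf r) m) = (\<lambda>m. pmf (poisson_pmf r) (Suc m) * real (Suc m))"
    by (rule ext) (rule poisA[OF r])
  finally have "(\<lambda>m. pmf (poisson_pmf r) (Suc m) * real (Suc m)) sums r" by simp
  from sums_Suc[OF this] show ?thesis by simp
qed

lemma pois2:
  assumes r: "r > 0"
  shows "(\<lambda>k. pmf (poisson_pmf r) k * (real k * (real k - 1))) sums (r^2)"
proof -
  have "(\<lambda>m. r^2 * pmf (poisson_pmf r) m) sums (r^2 * 1)" by (rule sums_mult[OF pois0[OF r]])
  also have "(\<lambda>m. r^2 * pmf (poisson_pmf r) m) = (\<lambda>m. pmf (poisson_pmf r) (Suc (Suc m)) * (real (Suc (Suc m)) * (real (Suc (Suc m)) - 1)))"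
    by (rule ext) (rule poisB[OF r])
  finally have "(\<lambda>m. pmf (poisson_pmf r) (Suc (Suc m)) * (real (Suc (Suc m)) * (real (Suc (Suc m)) - 1))) sums (r^2)" by simp
  from sums_Suc[OF this] have "(\<lambda>m. pmf (poisson_pmf r) (Suc m) * (real (Suc m) * (real (Suc m) - 1))) sums (r^2)" by simp
  from sums_Suc[OF this] show ?thesis by simp
qed

lemma pmf_expectation_nat:
  fixes p :: "nat pmf" and f :: "nat \<Rightarrow> real"
  assumes "summable (\<lambda>k. pmf p k * \<bar>f k\<bar>)"
  shows "measure_pmf.expectation p f = (\<Sum>k. pmf p k * f k)"
proof -
  have int: "integrable (count_space UNIV) (\<lambda>k. pmf p k *\<^sub>R f k)"
    using assms by (simp add: integrable_count_space_nat_iff abs_mult)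
  have "measure_pmf.expectation p f = integral\<^sup>L (count_space UNIV) (\<lambda>k. pmf p k *\<^sub>R f k)"
    unfolding measure_pmf_eq_density by (subst integral_density) auto
  also have "\<dots> = (\<Sum>k. pmf p k * f k)" using integral_count_space_nat[OF int] by simp
  finally show ?thesis .
qed

lemma telescope:
  fixes a :: "nat \<Rightarrow> real"
  assumes "\<And>j. j < k \<Longrightarrow> \<bar>a (Suc j) - a j\<bar> \<le> M"
  shows "m \<le> k \<Longrightarrow> \<bar>a k - a m\<bar> \<le> real (k - m) * M"
  using assms
proof (induction k)
  case 0 then show ?case by simp
next
  case (Suc k)
  show ?case
  proof (cases "m = Suc k")
    case True then show ?thesis by simp
  next
    case False
    hence mk: "m \<le> k" using Suc by simp
    have ih: "\<bar>a k - a m\<bar> \<le> real (k - m) * M" using Suc mk by auto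
    have "\<bar>a (Suc k) - a k\<bar> \<le> M" using Suc by auto
    moreover have "real (Suc k - m) = real (k - m) + 1" using mk by simp
    ultimately show ?thesis using ih by (simp add: algebra_simps)
  qed
qed

theorem lemma6p8:
  fixes a :: "nat \<Rightarrow> real"
  assumes "(\<lambda>n. a (Suc n) - a n) \<in> O(\<lambda>n. sqrt (real n))"
  shows "(\<lambda>n. \<bar>a n - measure_pmf.expectation (poisson_pmf (real n)) a\<bar>) \<in> O(\<lambda>n. real n)"
proof -
  obtain c where c: "c > 0" "eventually (\<lambda>n. norm (a (Suc n) - a n) \<le> c * norm (sqrt (real n))) at_top"
    using landau_o.bigE[OF assms] by blast
  then obtain N0 where N0: "\<And>m. m \<ge> N0 \<Longrightarrow> \<bar>a (Suc m) - a m\<bar> \<le> c * sqrt (real m)"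
    by (auto simp: eventually_at_top_linorder)
  define D where "D = (\<Sum>m<N0. \<bar>a (Suc m) - a m\<bar>)"
  have D0: "D \<ge> 0" unfolding D_def by (auto intro: sum_nonneg)
  have dbound: "\<bar>a (Suc m) - a m\<bar> \<le> c * sqrt (real m) + D" for m
  proof (cases "m < N0")
    case True
    have "\<bar>a (Suc m) - a m\<bar> \<le> D" unfolding D_def
      by (rule member_le_sum) (use True in auto)
    moreover have "c * sqrt (real m) \<ge> 0" using c by simp
    ultimately show ?thesis by linarith
  next
    case False thus ?thesis using N0[of m] D0 by simp
  qed
  define K where "K = c + D"
  have K0: "K > 0" using c D0 unfolding K_def by simp
  have pw: "\<bar>a k - a n\<bar> \<le> K * ((real k - real n)^2 + real k + real n + 1)" for k n
  proof -
    have gen: "\<bar>a k - a n\<bar> \<le> real (k - n) * (c * sqrt (real k + real n) + D)" if "n \<le> k" for k n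
    proof (rule telescope[OF _ that])
      fix j assume "j < k"
      have "sqrt (real j) \<le> sqrt (real k + real n)" using \<open>j < k\<close> by simp
      hence "c * sqrt (real j) \<le> c * sqrt (real k + real n)" using c by simp
      thus "\<bar>a (Suc j) - a j\<bar> \<le> c * sqrt (real k + real n) + D" using dbound[of j] by linarith
    qed
    define x where "x = \<bar>real k - real n\<bar>"
    define s where "s = sqrt (real k + real n)"
    have hx: "\<bar>a k - a n\<bar> \<le> x * (c * s + D)"
    proof (cases "n \<le> k")
      case True thus ?thesis using gen[OF True] by (simp add: x_def s_def of_nat_diff)
    next
      case False
      hence "k \<le> n" by simp
      have "x = real (n - k)" using \<open>k \<le> n\<close> by (simp add: x_def of_nat_diff)
      with gen[OF \<open>k \<le> n\<close>] show ?thesis by (simp add: s_def abs_minus_commute add.commute)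
    qed
    have s2: "s^2 = real k + real n" unfolding s_def by simp
    have x2: "x^2 = (real k - real n)^2" unfolding x_def by simp
    have "x * s \<le> (x^2 + s^2) / 2" using sum_squares_ge_zero[of "x - s" 0]
      by (simp add: power2_eq_square algebra_simps)
    hence xs: "x * s \<le> (real k - real n)^2 + real k + real n + 1"
    proof -
      have "(x^2 + s^2) / 2 \<le> (real k - real n)^2 + real k + real n + 1"
      proof -
        have g3: "\<And>y u v::real. y \<ge> 0 \<Longrightarrow> u \<ge> 0 \<Longrightarrow> v \<ge> 0 \<Longrightarrow> (y + (u + v)) / 2 \<le> y + u + v + 1" by simp
        show ?thesis unfolding s2 x2 by (rule g3) simp_all
      qed
      thus ?thesis using \<open>x * s \<le> (x^2 + s^2) / 2\<close> by linarith
    qed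
    have xx: "x \<le> (real k - real n)^2 + real k + real n + 1"
    proof -
      have x0: "x \<ge> 0" by (simp add: x_def)
      have e1: "(x - 1)^2 = x^2 - 2*x + 1" by (simp add: power2_eq_square algebra_simps)
      have "(x - 1)^2 \<ge> 0" by simp
      hence "x \<le> x^2 + 1" using e1 x0 by linarith
      thus ?thesis using x2 by simp
    qed
    have "x * (c * s + D) = c * (x * s) + D * x" by (simp add: algebra_simps)
    also have "\<dots> \<le> c * ((real k - real n)^2 + real k + real n + 1) + D * ((real k - real n)^2 + real k + real n + 1)"
      using xs xx c D0 by (intro add_mono mult_left_mono) auto
    also have "\<dots> = K * ((real k - real n)^2 + real k + real n + 1)" by (simp add: K_def algebra_simps)
    finally show ?thesis using hx by linarith
  qed
  have main: "\<bar>a n - measure_pmf.expectation (poisson_pmf (real n)) a\<bar> \<le> K * (3 * real n + 1)" if n1: "n \<ge> 1" for n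
  proof -
    define r where "r = real n"
    have r: "r > 0" using n1 by (simp add: r_def)
    define p where "p = pmf (poisson_pmf r)"
    define f where "f = (\<lambda>k. (real k - r)^2 + real k + r + 1)"
    have p0: "p k \<ge> 0" for k by (simp add: p_def)
    have f_eq: "f k = real k * (real k - 1) + (2 - 2*r) * real k + (r^2 + r + 1)" for k
      by (simp add: f_def power2_eq_square algebra_simps)
    have sf: "(\<lambda>k. p k * f k) sums (r^2 + (2 - 2*r) * r + (r^2 + r + 1) * 1)"
    proof -
      have "(\<lambda>k. p k * (real k * (real k - 1)) + (2 - 2*r) * (p k * real k) + (r^2 + r + 1) * p k) sums (r^2 + (2 - 2*r) * r + (r^2 + r + 1) * 1)"
        by (intro sums_add sums_mult pois2[OF r, folded p_def] pois1[OF r, folded p_def] pois0[OF r, folded p_def])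
      moreover have "(\<lambda>k. p k * (real k * (real k - 1)) + (2 - 2*r) * (p k * real k) + (r^2 + r + 1) * p k) = (\<lambda>k. p k * f k)"
        by (simp add: fun_eq_iff f_eq algebra_simps)
      ultimately show ?thesis by simp
    qed
    have fval: "(\<Sum>k. p k * f k) = 3 * r + 1" using sums_unique[OF sf] by (simp add: power2_eq_square algebra_simps)
    have bnd: "p k * \<bar>a k - a n\<bar> \<le> K * (p k * f k)" for k
      using mult_left_mono[OF pw[of k n] p0[of k]] by (simp add: f_def r_def algebra_simps)
    have sumK: "summable (\<lambda>k. K * (p k * f k))" using sums_summable[OF sf] by (rule summable_mult)
    have sd: "summable (\<lambda>k. p k * \<bar>a k - a n\<bar>)"
      by (rule summable_comparison_test'[OF sumK]) (use bnd p0 in \<open>auto simp: abs_mult\<close>)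
    have s0: "summable (\<lambda>k. p k * \<bar>a n\<bar>)" using sums_summable[OF sums_mult2[OF pois0[OF r]]] by (simp add: p_def)
    have sa: "summable (\<lambda>k. p k * \<bar>a k\<bar>)"
    proof (rule summable_comparison_test'[OF summable_add[OF sd s0]])
      fix k
      have "\<bar>a k\<bar> \<le> \<bar>a k - a n\<bar> + \<bar>a n\<bar>" by linarith
      hence "p k * \<bar>a k\<bar> \<le> p k * \<bar>a k - a n\<bar> + p k * \<bar>a n\<bar>" using p0[of k] by (simp add: distrib_left[symmetric] mult_left_mono)
      thus "norm (p k * \<bar>a k\<bar>) \<le> p k * \<bar>a k - a n\<bar> + p k * \<bar>a n\<bar>" using p0[of k] by simp
    qed
    have E: "measure_pmf.expectation (poisson_pmf r) a = (\<Sum>k. p k * a k)"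
      using pmf_expectation_nat[of "poisson_pmf r" a] sa by (simp add: p_def)
    have sa': "summable (\<lambda>k. p k * a k)"
      by (rule summable_comparison_test'[OF sa]) (use p0 in \<open>auto simp: abs_mult\<close>)
    have s0': "(\<lambda>k. p k * a n) sums (1 * a n)" using sums_mult2[OF pois0[OF r]] by (simp add: p_def)
    have diff: "(\<lambda>k. p k * a k - p k * a n) sums ((\<Sum>k. p k * a k) - a n)"
      using sums_diff[OF summable_sums[OF sa'] s0'] by simp
    have "\<bar>(\<Sum>k. p k * a k) - a n\<bar> = \<bar>\<Sum>k. p k * (a k - a n)\<bar>"
      using sums_unique[OF diff] by (simp add: right_diff_distrib)
    also have "\<dots> \<le> (\<Sum>k. \<bar>p k * (a k - a n)\<bar>)"
      by (rule summable_rabs) (use sd p0 in \<open>simp add: abs_mult\<close>)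
    also have "\<dots> \<le> (\<Sum>k. K * (p k * f k))"
    proof (rule suminf_le)
      show "summable (\<lambda>k. \<bar>p k * (a k - a n)\<bar>)" using sd p0 by (simp add: abs_mult)
      show "summable (\<lambda>k. K * (p k * f k))" by (rule sumK)
      fix k show "\<bar>p k * (a k - a n)\<bar> \<le> K * (p k * f k)" using bnd[of k] p0[of k] by (simp add: abs_mult)
    qed
    also have "\<dots> = K * (3 * r + 1)" using suminf_mult[OF sums_summable[OF sf], of K] fval by simp
    finally show ?thesis using E by (simp add: r_def abs_minus_commute)
  qed
  show ?thesis
  proof (rule bigoI[where c = "4 * K"])
    show "eventually (\<lambda>n. norm \<bar>a n - measure_pmf.expectation (poisson_pmf (real n)) a\<bar> \<le> 4 * K * norm (real n)) at_top"
      unfolding eventually_at_top_linorder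
    proof (intro exI allI impI)
      fix n :: nat assume "n \<ge> 1"
      have "K * (3 * real n + 1) \<le> 4 * K * real n" using K0 \<open>n \<ge> 1\<close> by (simp add: algebra_simps)
      thus "norm \<bar>a n - measure_pmf.expectation (poisson_pmf (real n)) a\<bar> \<le> 4 * K * norm (real n)"
        using main[OF \<open>n \<ge> 1\<close>] by simp
    qed
  qed
qed

end
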